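(* Let $\mathbb{F}$ be a field with $\mathrm{char}(\mathbb{F})\neq 2,3$, let $k\in\mathbb{N}$ and $\beta_3,\dots,\beta_{3k}\in\mathbb{F}$ with $\beta_{3k}\neq0$, and let $x=\sum_{j=1}^k\beta_{3j}p_{\bar1,3j}$. Then the ideal $I=(x)$ of $\hat{\mathcal{H}}$ generated by $x$ has basis $$x,\quad x^{\tau_0},\quad s_ix,\quad (s_ix)^{\tau_0}\qquad (i\in3\mathbb{N}).$$
   Context: Notation: $\mathbb{N}=\{1,2,3,\dots\}$, $3\mathbb{N}=\{3,6,9,\dots\}$; for $r\in\mathbb{Z}$, $\bar r=r+3\mathbb{Z}\in\mathbb{Z}_3$. The algebra $\hat{\mathcal{H}}$ is the commutative $\mathbb{F}$-algebra with basis $\{a_i:i\in\mathbb{Z}\}\cup\{s_j:j\in\mathbb{N}\}\cup\{p_{\bar r,k}:\bar r\in\{\bar1,\bar2\},\ k\in 3\mathbb{N}\}$, where $s_0=0$, $p_{\bar r,j}=0$ for all $\bar r$ whenever $j\notin 3\mathbb{N}$, $p_{\bar 0,j}=-p_{\bar1,j}-p_{\bar2,j}$, $z_{\bar r,j}=p_{\bar r+\bar1,j}-p_{\bar r-\bar1,j}$, and for $i,i'\in\mathbb{Z}$, $j,l\in\mathbb{N}$, $h,k\in3\mathbb{N}$, $\bar r,\bar t\in\mathbb{Z}_3$: (H1) $a_ia_{i'}=\tfrac12(a_i+a_{i'})+s_{|i-i'|}+z_{\bar\imath,|i-i'|}$; (H2) $a_is_j=-\tfrac34a_i+\tfrac38(a_{i-j}+a_{i+j})+\tfrac32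 s_j-z_{\bar\imath,j}$; (H3) $a_ip_{\bar r,k}=\tfrac32p_{\bar r,k}-p_{-(\bar\imath+\bar r),k}$; (H4) $s_js_l=\tfrac34(s_j+s_l)-\tfrac38(s_{|j-l|}+s_{j+l})$; (H5) $s_jp_{\bar r,k}=\tfrac34(p_{\bar r,j}+p_{\bar r,k})-\tfrac38(p_{\bar r,|j-k|}+p_{\bar r,j+k})$; (H6) $p_{\bar r,h}p_{\bar t,k}=\tfrac14(z_{-(\bar r+\bar t),h}+z_{-(\bar r+\bar t),k})-\tfrac18(z_{-(\bar r+\bar t),|h-k|}+z_{-(\bar r+\bar t),h+k})$. $\tau_0$ denotes the automorphism of $\hat{\mathcal{H}}$ given by $a_i\mapsto a_{-i}$, $s_j\mapsto s_j$, $p_{\bar r,k}\mapsto -p_{-\bar r,k}$, and $y^{\tau_0}$ is the image of $y$. *)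

theory Defs
  imports Main "HOL-Library.Function_Algebras"
begin

text \<open>Basis indices of the algebra H-hat:
  A i  ~ a_i (i in Z);  S j ~ s_j (j >= 1);  P True k ~ p_{1,k}, P False k ~ p_{2,k} (k in 3N).\<close>

datatype hidx = A int | S nat | P bool nat

fun hvalid :: "hidx \<Rightarrow> bool" where
  "hvalid (A i) = True"
| "hvalid (S j) = (0 < j)"
| "hvalid (P r k) = (0 < k \<and> 3 dvd k)"

type_synonym 'a hvec = "hidx \<Rightarrow> 'a"

definition hsupp :: "'a::zero hvec \<Rightarrow> hidx set" where
  "hsupp v = {b. v b \<noteq> 0}"

definition Hcarrier :: "'a::field hvec set" where
  "Hcarrier = {v. finite (hsupp v) \<and> (\<forall>b\<in>hsupp v. hvalid b)}"

definition sc :: "'a::field \<Rightarrow> 'a hvec \<Rightarrow> 'a hvec" where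
  "sc c v = (\<lambda>b. c * v b)"

definition ev :: "hidx \<Rightarrow> 'a::field hvec" where
  "ev b = (\<lambda>c. if c = b then 1 else 0)"

definition av :: "int \<Rightarrow> 'a::field hvec" where
  "av i = ev (A i)"

definition sv :: "nat \<Rightarrow> 'a::field hvec" where
  "sv j = (if j = 0 then 0 else ev (S j))"

definition pv :: "int \<Rightarrow> nat \<Rightarrow> 'a::field hvec" where
  "pv r j = (if j = 0 \<or> \<not> 3 dvd j then 0
             else if r mod 3 = 1 then ev (P True j)
             else if r mod 3 = 2 then ev (P False j)
             else - ev (P True j) - ev (P False j))"

definition zv :: "int \<Rightarrow> nat \<Rightarrow> 'a::field hvec" where
  "zv r j = pv (r + 1) j - pv (r - 1) j"

fun rr :: "bool \<Rightarrow> int" where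
  "rr True = 1" | "rr False = 2"

definition prodAS :: "int \<Rightarrow> nat \<Rightarrow> 'a::field hvec" where
  "prodAS i j = sc (-3/4) (av i) + sc (3/8) (av (i - int j) + av (i + int j))
                + sc (3/2) (sv j) - zv i j"

definition prodAP :: "int \<Rightarrow> bool \<Rightarrow> nat \<Rightarrow> 'a::field hvec" where
  "prodAP i r k = sc (3/2) (pv (rr r) k) - pv (- (i + rr r)) k"

definition prodSP :: "nat \<Rightarrow> bool \<Rightarrow> nat \<Rightarrow> 'a::field hvec" where
  "prodSP j r k = sc (3/4) (pv (rr r) j + pv (rr r) k)
                  - sc (3/8) (pv (rr r) (nat \<bar>int j - int k\<bar>) + pv (rr r) (j + k))"

fun bprod :: "hidx \<Rightarrow> hidx \<Rightarrow> 'a::field hvec" where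
  "bprod (A i) (A i') = sc (1/2) (av i + av i') + sv (nat \<bar>i - i'\<bar>) + zv i (nat \<bar>i - i'\<bar>)"
| "bprod (A i) (S j) = prodAS i j"
| "bprod (S j) (A i) = prodAS i j"
| "bprod (A i) (P r k) = prodAP i r k"
| "bprod (P r k) (A i) = prodAP i r k"
| "bprod (S j) (S l) = sc (3/4) (sv j + sv l) - sc (3/8) (sv (nat \<bar>int j - int l\<bar>) + sv (j + l))"
| "bprod (S j) (P r k) = prodSP j r k"
| "bprod (P r k) (S j) = prodSP j r k"
| "bprod (P r h) (P t k) =
     sc (1/4) (zv (- (rr r + rr t)) h + zv (- (rr r + rr t)) k)
     - sc (1/8) (zv (- (rr r + rr t)) (nat \<bar>int h - int k\<bar>) + zv (- (rr r + rr t)) (h + k))"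

definition hmult :: "'a::field hvec \<Rightarrow> 'a hvec \<Rightarrow> 'a hvec" where
  "hmult u v = (\<lambda>c. \<Sum>b\<in>hsupp u. \<Sum>d\<in>hsupp v. u b * v d * bprod b d c)"

text \<open>The automorphism tau_0: a_i -> a_{-i}, s_j -> s_j, p_{r,k} -> - p_{-r,k}.\<close>
definition tau0 :: "'a::field hvec \<Rightarrow> 'a hvec" where
  "tau0 v = (\<lambda>b. case b of A i \<Rightarrow> v (A (- i)) | S j \<Rightarrow> v (S j) | P r k \<Rightarrow> - v (P (\<not> r) k))"

inductive_set hideal :: "'a::field hvec \<Rightarrow> 'a hvec set" for x where
  gen: "x \<in> hideal x"
| zero: "0 \<in> hideal x"
| add: "u \<in> hideal x \<Longrightarrow> v \<in> hideal x \<Longrightarrow> u + v \<in> hideal x"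
| smult: "v \<in> hideal x \<Longrightarrow> sc c v \<in> hideal x"
| mult: "y \<in> Hcarrier \<Longrightarrow> v \<in> hideal x \<Longrightarrow> hmult y v \<in> hideal x"

definition hspan :: "('i \<Rightarrow> 'a::field hvec) \<Rightarrow> 'i set \<Rightarrow> 'a hvec set" where
  "hspan g J = {v. \<exists>F c. finite F \<and> F \<subseteq> J \<and> v = (\<lambda>b. \<Sum>j\<in>F. c j * g j b)}"

definition hlin_indep :: "('i \<Rightarrow> 'a::field hvec) \<Rightarrow> 'i set \<Rightarrow> bool" where
  "hlin_indep g J = (\<forall>F c. finite F \<longrightarrow> F \<subseteq> J \<longrightarrow> (\<lambda>b. \<Sum>j\<in>F. c j * g j b) = 0
                         \<longrightarrow> (\<forall>j\<in>F. c j = 0))"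

definition is_hbasis :: "('i \<Rightarrow> 'a::field hvec) \<Rightarrow> 'i set \<Rightarrow> 'a hvec set \<Rightarrow> bool" where
  "is_hbasis g J V = (hlin_indep g J \<and> hspan g J = V)"

end

theory Submission
  imports Defs
begin

lemma ev_apply: "ev b c = (if c = b then 1 else 0)" by (simp add: ev_def)

lemma hsupp_ev[simp]: "hsupp (ev b :: 'a::field hvec) = {b}"
  by (auto simp: hsupp_def ev_def)

lemma hmult_expand:
  fixes u v :: "'a::field hvec"
  assumes "finite B" "hsupp u \<subseteq> B" "finite D" "hsupp v \<subseteq> D"
  shows "hmult u v = (\<lambda>c. \<Sum>b\<in>B. \<Sum>d\<in>D. u b * v d * bprod b d c)"
proof
  fix c
  have fu: "finite (hsupp u)" using assms finite_subset by blast
  have fv: "finite (hsupp v)" using assms finite_subset by blast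
  have "(\<Sum>b\<in>hsupp u. \<Sum>d\<in>hsupp v. u b * v d * bprod b d c)
      = (\<Sum>b\<in>B. \<Sum>d\<in>hsupp v. u b * v d * bprod b d c)"
    by (rule sum.mono_neutral_left) (use assms in \<open>auto simp: hsupp_def\<close>)
  also have "\<dots> = (\<Sum>b\<in>B. \<Sum>d\<in>D. u b * v d * bprod b d c)"
    by (intro sum.cong refl sum.mono_neutral_left) (use assms in \<open>auto simp: hsupp_def\<close>)
  finally show "hmult u v c = (\<Sum>b\<in>B. \<Sum>d\<in>D. u b * v d * bprod b d c)"
    by (simp add: hmult_def)
qed

lemma hmult_ev:
  fixes v :: "'a::field hvec"
  assumes "finite D" "hsupp v \<subseteq> D"
  shows "hmult (ev b) v = (\<lambda>c. \<Sum>d\<in>D. v d * bprod b d c)"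
  by (subst hmult_expand[of "{b}" _ D]) (use assms in \<open>simp_all only: hsupp_ev, auto simp: ev_def\<close>)

lemma hmult_left:
  fixes y v :: "'a::field hvec"
  shows "hmult y v = (\<lambda>c. \<Sum>b\<in>hsupp y. y b * hmult (ev b) v c)"
  unfolding hmult_def by (simp only: hsupp_ev) (auto simp: ev_def sum_distrib_left mult.assoc)

lemma hsupp_lincomb:
  fixes f :: "'i \<Rightarrow> 'a::field hvec"
  shows   "hsupp (\<lambda>d. \<Sum>j\<in>F. a j * f j d) \<subseteq> (\<Union>j\<in>F. hsupp (f j))"
proof
  fix x assume "x \<in> hsupp (\<lambda>d. \<Sum>j\<in>F. a j * f j d)"
  then have "(\<Sum>j\<in>F. a j * f j x) \<noteq> 0" by (simp add: hsupp_def)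
  then have "\<exists>j\<in>F. f j x \<noteq> 0" using sum.neutral[of F "\<lambda>j. a j * f j x"] by auto
  then obtain j where "j \<in> F" "f j x \<noteq> 0" by blast
  then show "x \<in> (\<Union>j\<in>F. hsupp (f j))" by (auto simp: hsupp_def)
qed

lemma hmult_lincomb:
  fixes f :: "'i \<Rightarrow> 'a::field hvec"
  assumes "finite F" "\<And>j. j \<in> F \<Longrightarrow> finite (hsupp (f j))"
  shows "hmult (ev b) (\<lambda>d. \<Sum>j\<in>F. a j * f j d) = (\<lambda>c. \<Sum>j\<in>F. a j * hmult (ev b) (f j) c)"
proof -
  define D where "D = (\<Union>j\<in>F. hsupp (f j))"
  have fD: "finite D" using assms by (simp add: D_def)
  have s1: "hsupp (\<lambda>d. \<Sum>j\<in>F. a j * f j d) \<subseteq> D" unfolding D_def by (rule hsupp_lincomb)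
  have s2: "\<And>j. j \<in> F \<Longrightarrow> hsupp (f j) \<subseteq> D" unfolding D_def by auto
  show ?thesis
  proof
    fix c
    have "hmult (ev b) (\<lambda>d. \<Sum>j\<in>F. a j * f j d) c = (\<Sum>d\<in>D. (\<Sum>j\<in>F. a j * f j d) * bprod b d c)"
      by (simp add: hmult_ev[OF fD s1])
    also have "\<dots> = (\<Sum>j\<in>F. a j * (\<Sum>d\<in>D. f j d * bprod b d c))"
      by (simp add: sum_distrib_right sum_distrib_left mult.assoc sum.swap[of _ D])
    also have "\<dots> = (\<Sum>j\<in>F. a j * hmult (ev b) (f j) c)"
      by (rule sum.cong[OF refl]) (simp add: hmult_ev[OF fD s2])
    finally show "hmult (ev b) (\<lambda>d. \<Sum>j\<in>F. a j * f j d) c = (\<Sum>j\<in>F. a j * hmult (ev b) (f j) c)" .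
  qed
qed

lemma pv_mod: "pv (c mod 3) = pv c"
  by (rule ext)+ (simp add: pv_def)

lemma pv_cong: "c mod 3 = c' mod 3 \<Longrightarrow> pv c = pv c'"
  by (metis pv_mod)

lemma pv_inv: "j = 0 \<or> \<not> 3 dvd j \<Longrightarrow> pv c j = 0"
  by (auto simp: pv_def)

lemma pv_1: "0 < j \<Longrightarrow> 3 dvd j \<Longrightarrow> pv 1 j = ev (P True j)"
  by (auto simp: pv_def)
lemma pv_2: "0 < j \<Longrightarrow> 3 dvd j \<Longrightarrow> pv 2 j = ev (P False j)"
  by (auto simp: pv_def)
lemma pv_0: "pv 0 j = - pv 1 j - pv 2 j"
  by (auto simp: pv_def)

lemma mod3_cases: obtains "(c::int) mod 3 = 0" | "c mod 3 = 1" | "c mod 3 = 2"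
  by linarith

lemma pv_sum3: "pv r n + pv (r+1) n + pv (r+2) n = 0"
proof -
  have "r mod 3 = 0 \<and> (r+1) mod 3 = 1 \<and> (r+2) mod 3 = 2
      \<or> r mod 3 = 1 \<and> (r+1) mod 3 = 2 \<and> (r+2) mod 3 = 0
      \<or> r mod 3 = 2 \<and> (r+1) mod 3 = 0 \<and> (r+2) mod 3 = 1" by presburger
  then show ?thesis
    by (elim disjE conjE) (simp_all add: pv_cong[of r 0] pv_cong[of r 1] pv_cong[of r 2] pv_cong[of "r+1" 0] pv_cong[of "r+1" 1] pv_cong[of "r+1" 2] pv_cong[of "r+2" 0] pv_cong[of "r+2" 1] pv_cong[of "r+2" 2] pv_0)
qed

lemma tau0_ev_PT: "tau0 (ev (P True j)) = - ev (P False j)"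
  by (rule ext) (auto simp: tau0_def ev_def split: hidx.split)
lemma tau0_ev_PF: "tau0 (ev (P False j)) = - ev (P True j)"
  by (rule ext) (auto simp: tau0_def ev_def split: hidx.split)
lemma tau0_add: "tau0 (u + v) = tau0 u + tau0 v"
  by (rule ext) (auto simp: tau0_def split: hidx.split)
lemma tau0_minus: "tau0 (- u) = - tau0 u"
  by (rule ext) (auto simp: tau0_def split: hidx.split)
lemma tau0_diff: "tau0 (u - v) = tau0 u - tau0 v"
  by (rule ext) (auto simp: tau0_def split: hidx.split)
lemma tau0_zero: "tau0 0 = 0"
  by (rule ext) (auto simp: tau0_def split: hidx.split)

lemma tau0_pv: "tau0 (pv r n) = - pv (- r) n"
proof (cases "n = 0 \<or> \<not> 3 dvd n")
  case True then show ?thesis by (simp add: pv_inv tau0_zero)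
next
  case False
  then have n: "0 < n" "3 dvd n" by auto
  show ?thesis
  proof (cases r rule: mod3_cases)
    case 1
    then have "(-r) mod 3 = 0" by presburger
    then show ?thesis using 1 n
      by (simp add: pv_cong[of r 0] pv_cong[of "-r" 0] pv_0 pv_1 pv_2 tau0_diff tau0_minus tau0_ev_PT tau0_ev_PF)
  next
    case 2
    then have "(-r) mod 3 = 2" by presburger
    then show ?thesis using 2 n
      by (simp add: pv_cong[of r 1] pv_cong[of "-r" 2] pv_1 pv_2 tau0_ev_PT tau0_ev_PF)
  next
    case 3
    then have "(-r) mod 3 = 1" by presburger
    then show ?thesis using 3 n
      by (simp add: pv_cong[of r 2] pv_cong[of "-r" 1] pv_1 pv_2 tau0_ev_PT tau0_ev_PF)
  qed
qed

lemma two_pows: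
  assumes "(2::'a::field) \<noteq> 0"
  shows "(4::'a) \<noteq> 0" "(8::'a) \<noteq> 0" "(16::'a) \<noteq> 0" "(32::'a) \<noteq> 0" "(64::'a) \<noteq> 0" "(128::'a) \<noteq> 0" "(256::'a) \<noteq> 0" "(512::'a) \<noteq> 0" "(1024::'a) \<noteq> 0" "(2048::'a) \<noteq> 0" "(4096::'a) \<noteq> 0" "(8192::'a) \<noteq> 0" "(16384::'a) \<noteq> 0" "(32768::'a) \<noteq> 0"
proof -
  have "\<And>n. (2::'a)^n \<noteq> 0" using assms by simp
  from this[of 2] this[of 3] this[of 4] this[of 5] this[of 6] this[of 7] this[of 8] this[of 9] this[of 10] this[of 11] this[of 12] this[of 13] this[of 14] this[of 15]
  show "(4::'a) \<noteq> 0" "(8::'a) \<noteq> 0" "(16::'a) \<noteq> 0" "(32::'a) \<noteq> 0" "(64::'a) \<noteq> 0" "(128::'a) \<noteq> 0" "(256::'a) \<noteq> 0" "(512::'a) \<noteq> 0" "(1024::'a) \<noteq> 0" "(2048::'a) \<noteq> 0" "(4096::'a) \<noteq> 0" "(8192::'a) \<noteq> 0" "(16384::'a) \<noteq> 0" "(32768::'a) \<noteq> 0"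
    by simp_all
qed

lemma key_scalar:
  fixes q :: "int \<Rightarrow> 'a::field"
  assumes ev: "\<And>n. q (- n) = q n" and two: "(2::'a) \<noteq> 0"
  defines "M \<equiv> \<lambda>j a. 3/4 * (q j + q a) - 3/8 * (q (j - a) + q (j + a))"
  shows "3/4 * (M j i + M j m) - 3/8 * (M j (i - m) + M j (i + m))
       = 3/4 * (M i m + M j m) - 3/8 * (M (i + j) m + M (i - j) m)"
proof -
  have e1: "q (j - i) = q (i - j)" using ev[of "i - j"] by simp
  have e2: "q (j - (i - m)) = q (i - j - m)" using ev[of "i - j - m"] by (simp add: algebra_simps)
  have e3: "q (j - (i + m)) = q (i - j + m)" using ev[of "i - j + m"] by (simp add: algebra_simps)
  have e4: "q (j + (i - m)) = q (i + j - m)" by (simp add: algebra_simps)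
  have e5: "q (j + (i + m)) = q (i + j + m)" by (simp add: algebra_simps)
  have e6: "q (j + i) = q (i + j)" by (simp add: algebra_simps)
  show ?thesis unfolding M_def e1 e2 e3 e4 e5 e6
    using two_pows[OF two] two by (simp add: field_simps)
qed

definition Qv :: "int \<Rightarrow> int \<Rightarrow> 'a::field hvec" where
  "Qv c n = pv c (nat \<bar>n\<bar>)"

definition Mform :: "(int \<Rightarrow> 'a::field hvec) \<Rightarrow> int \<Rightarrow> int \<Rightarrow> 'a hvec" where
  "Mform q i n = (\<lambda>d. 3/4 * (q i d + q n d) - 3/8 * (q (i - n) d + q (i + n) d))"

lemma Qv_even: "Qv c (- n) = Qv c n" by (simp add: Qv_def)
lemma Qv_0[simp]: "Qv c 0 = 0" by (rule ext) (simp add: Qv_def pv_def)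
lemma Qv_mod: "Qv (c mod 3) = Qv c" by (rule ext) (simp add: Qv_def pv_mod)
lemma Qv_inv: "\<not> 3 dvd n \<Longrightarrow> Qv c n = 0"
  by (simp add: Qv_def pv_inv)

lemma key_hvec:
  fixes q :: "int \<Rightarrow> 'a::field hvec"
  assumes ev: "\<And>n. q (- n) = q n" and two: "(2::'a) \<noteq> 0"
  shows "Mform (\<lambda>a. Mform q j a) i m
       = (\<lambda>d. 3/4 * (Mform q i m d + Mform q j m d) - 3/8 * (Mform q (i + j) m d + Mform q (i - j) m d))"
proof
  fix d
  have ev': "\<And>n. q (- n) d = q n d" using ev by simp
  show "Mform (\<lambda>a. Mform q j a) i m d = 3/4 * (Mform q i m d + Mform q j m d) - 3/8 * (Mform q (i + j) m d + Mform q (i - j) m d)"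
    using key_scalar[of "\<lambda>a. q a d", OF ev' two, of j i m] by (simp add: Mform_def)
qed

lemma Mform_even:
  assumes ev: "\<And>n. q (- n) = q n"
  shows "Mform q i (- n) = Mform q i n"
proof -
  have "q (i - - n) = q (i + n)" "q (i + - n) = q (i - n)" by simp_all
  then show ?thesis using ev[of n] by (simp add: Mform_def algebra_simps)
qed

lemma hsupp_pv: "hsupp (pv c n) \<subseteq> {P True n, P False n}"
  by (auto simp: hsupp_def pv_def ev_def split: if_splits)
lemma fin_pv[simp]: "finite (hsupp (pv c n))"
  using hsupp_pv finite_subset by blast
lemma fin_Qv[simp]: "finite (hsupp (Qv c n))"
  by (simp add: Qv_def)

lemma hsupp_Mform: "hsupp (Mform q i n) \<subseteq> hsupp (q i) \<union> hsupp (q n) \<union> hsupp (q (i - n)) \<union> hsupp (q (i + n))"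
  by (auto simp: hsupp_def Mform_def)
lemma fin_Mform: "(\<And>a. finite (hsupp (q a))) \<Longrightarrow> finite (hsupp (Mform q i n))"
  by (meson finite_UnI finite_subset hsupp_Mform)

lemma hmult_Mform:
  fixes q :: "int \<Rightarrow> 'a::field hvec"
  assumes fin: "\<And>a. finite (hsupp (q a))"
  shows "hmult (ev b) (Mform q i n) = Mform (\<lambda>a. hmult (ev b) (q a)) i n"
proof
  fix c
  define D where "D = hsupp (q i) \<union> hsupp (q n) \<union> hsupp (q (i - n)) \<union> hsupp (q (i + n))"
  have fD: "finite D" using fin by (simp add: D_def)
  have s: "hsupp (q i) \<subseteq> D" "hsupp (q n) \<subseteq> D" "hsupp (q (i - n)) \<subseteq> D" "hsupp (q (i + n)) \<subseteq> D"
    "hsupp (Mform q i n) \<subseteq> D" using hsupp_Mform by (auto simp: D_def)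
  show "hmult (ev b) (Mform q i n) c = Mform (\<lambda>a. hmult (ev b) (q a)) i n c"
  proof -
    have "hmult (ev b) (Mform q i n) c = (\<Sum>d\<in>D. Mform q i n d * bprod b d c)"
      by (simp add: hmult_ev[OF fD s(5)])
    also have "\<dots> = (\<Sum>d\<in>D. 3/4 * (q i d * bprod b d c) + 3/4 * (q n d * bprod b d c)
        - 3/8 * (q (i - n) d * bprod b d c) - 3/8 * (q (i + n) d * bprod b d c))"
      by (rule sum.cong) (simp_all add: Mform_def ring_distribs mult.assoc)
    also have "\<dots> = 3/4 * (\<Sum>d\<in>D. q i d * bprod b d c) + 3/4 * (\<Sum>d\<in>D. q n d * bprod b d c)
        - 3/8 * (\<Sum>d\<in>D. q (i - n) d * bprod b d c) - 3/8 * (\<Sum>d\<in>D. q (i + n) d * bprod b d c)"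
      by (simp only: sum.distrib sum_subtractf sum_distrib_left)
    also have "\<dots> = Mform (\<lambda>a. hmult (ev b) (q a)) i n c"
      by (simp add: hmult_ev[OF fD s(1)] hmult_ev[OF fD s(2)] hmult_ev[OF fD s(3)]
        hmult_ev[OF fD s(4)] Mform_def algebra_simps)
    finally show ?thesis .
  qed
qed

lemma hmult_ev_ev: "hmult (ev b) (ev d :: 'a::field hvec) = bprod b d"
  by (subst hmult_ev[of "{d}"]) (auto simp: ev_def hsupp_def)

lemma hmult_ev_zero: "hmult (ev b) (0 :: 'a::field hvec) = 0"
  by (subst hmult_ev[of "{}"]) (auto simp: hsupp_def)

lemma hmult_ev_neg2:
  assumes "d1 \<noteq> d2"
  shows "hmult (ev b) (- ev d1 - ev d2 :: 'a::field hvec) = - bprod b d1 - bprod b d2"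
proof -
  have D: "hsupp (- ev d1 - ev d2 :: 'a hvec) \<subseteq> {d1, d2}" by (auto simp: hsupp_def ev_def)
  show ?thesis
    by (subst hmult_ev[OF _ D]) (use assms in \<open>auto simp: ev_def\<close>)
qed

lemma hmult_pv:
  assumes "0 < m" "3 dvd m"
  shows "hmult (ev b) (pv c m :: 'a::field hvec) =
     (if c mod 3 = 1 then bprod b (P True m) else if c mod 3 = 2 then bprod b (P False m)
      else - bprod b (P True m) - bprod b (P False m))"
  using assms by (simp add: pv_def hmult_ev_ev hmult_ev_neg2)

lemma Mform_abs:
  "Mform (Qv c :: int \<Rightarrow> 'a::field hvec) i n = Mform (Qv c) i \<bar>n\<bar>"
  by (cases "n \<ge> 0") (auto simp: Mform_even Qv_even)

lemma Mform_zero: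
  assumes ev: "\<And>n. q (- n) = q n" and z: "q 0 = 0" and two: "(2::'a::field) \<noteq> 0"
  shows "Mform (q :: int \<Rightarrow> 'a hvec) i 0 = 0"
  by (rule ext) (use two_pows[OF two] two in \<open>simp add: Mform_def z field_simps\<close>)

lemma Qv_nat: "Qv c (int m) = pv c m" by (simp add: Qv_def)

lemma LS:
  fixes c :: int and n :: int and j :: nat
  assumes j: "0 < j" and n: "3 dvd n" and two: "(2::'a::field) \<noteq> 0"
  shows "hmult (ev (S j)) (Qv c n :: 'a hvec) = Mform (Qv c) (int j) n"
proof -
  define m where "m = nat \<bar>n\<bar>"
  have m3: "3 dvd m" using n by (simp add: m_def)
  have L: "Qv c n = (pv c m :: 'a hvec)" by (simp add: Qv_def m_def)
  have R: "Mform (Qv c) (int j) n = Mform (Qv c :: int \<Rightarrow> 'a hvec) (int j) (int m)"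
    by (simp add: m_def Mform_abs[of c _ n])
  show ?thesis
  proof (cases "m = 0")
    case True
    then show ?thesis unfolding L R
      using Mform_zero[of "Qv c", OF Qv_even Qv_0 two] by (simp add: pv_inv hmult_ev_zero)
  next
    case False
    then have m0: "0 < m" by simp
    have Qc: "Qv c = Qv (c mod 3)" by (simp add: Qv_mod)
    have jm: "nat (int j + int m) = j + m" by simp
    have "hmult (ev (S j)) (pv c m :: 'a hvec) = Mform (Qv c) (int j) (int m)"
    proof (cases c rule: mod3_cases)
      case 1
      show ?thesis
        apply (subst hmult_pv[OF m0 m3])
        by (rule ext) (simp add: 1 Qc jm prodSP_def sc_def Mform_def Qv_def pv_0 ring_distribs)
    next
      case 2
      show ?thesis
        apply (subst hmult_pv[OF m0 m3])
        by (rule ext) (simp add: 2 Qc jm prodSP_def sc_def Mform_def Qv_def)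
    next
      case 3
      show ?thesis
        apply (subst hmult_pv[OF m0 m3])
        by (rule ext) (simp add: 3 Qc jm prodSP_def sc_def Mform_def Qv_def)
    qed
    then show ?thesis unfolding L R .
  qed
qed

lemma LA:
  fixes c a :: int and n :: int
  assumes n: "3 dvd n"
  shows "hmult (ev (A a)) (Qv c n :: 'a::field hvec) = (\<lambda>d. 3/2 * Qv c n d - Qv (-(a+c)) n d)"
proof -
  define m where "m = nat \<bar>n\<bar>"
  have m3: "3 dvd m" using n by (simp add: m_def)
  have L: "\<And>c. Qv c n = (pv c m :: 'a hvec)" by (simp add: Qv_def m_def)
  show ?thesis
  proof (cases "m = 0")
    case True
    then show ?thesis unfolding L by (simp add: pv_inv hmult_ev_zero) (simp add: zero_fun_def)
  next
    case False
    then have m0: "0 < m" by simp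
    have s3f: "pv (-a) m = (- pv (-(a+1)) m - pv (-(a+2)) m :: 'a hvec)"
    proof -
      have h1: "-(a+2)+1 = -(a+1)" and h2: "-(a+2)+2 = -a" by simp_all
      have "pv (-(a+2)) m + pv (-(a+1)) m + pv (-a) m = (0 :: 'a hvec)"
        using pv_sum3[of "-(a+2)" m] unfolding h1 h2 .
      then show ?thesis by (simp add: algebra_simps eq_neg_iff_add_eq_0)
    qed
    have "hmult (ev (A a)) (pv c m :: 'a hvec) = (\<lambda>d. 3/2 * pv c m d - pv (-(a+c)) m d)"
    proof (cases c rule: mod3_cases)
      case 1
      have e: "pv (-(a+c)) = pv (-a)" by (rule pv_cong) (use 1 in presburger)
      have e': "pv c = pv 0" by (rule pv_cong) (use 1 in presburger)
      have "hmult (ev (A a)) (pv c m :: 'a hvec) = - prodAP a True m - prodAP a False m"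
        using 1 by (simp add: hmult_pv[OF m0 m3])
      also have "\<dots> = (\<lambda>d. 3/2 * pv c m d - pv (-(a+c)) m d)"
        unfolding prodAP_def sc_def rr.simps e e' pv_0 s3f
        by (rule ext) (simp add: algebra_simps)
      finally show ?thesis .
    next
      case 2
      have e: "pv (-(a+c)) = pv (-(a+1))" by (rule pv_cong) (use 2 in presburger)
      have e': "pv c = pv 1" by (rule pv_cong) (use 2 in presburger)
      have "hmult (ev (A a)) (pv c m :: 'a hvec) = prodAP a True m"
        using 2 by (simp add: hmult_pv[OF m0 m3])
      also have "\<dots> = (\<lambda>d. 3/2 * pv c m d - pv (-(a+c)) m d)"
        unfolding prodAP_def sc_def rr.simps e e'
        by (rule ext) (simp add: algebra_simps)
      finally show ?thesis .
    next
      case 3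
      have e: "pv (-(a+c)) = pv (-(a+2))" by (rule pv_cong) (use 3 in presburger)
      have e': "pv c = pv 2" by (rule pv_cong) (use 3 in presburger)
      have "hmult (ev (A a)) (pv c m :: 'a hvec) = prodAP a False m"
        using 3 by (simp add: hmult_pv[OF m0 m3])
      also have "\<dots> = (\<lambda>d. 3/2 * pv c m d - pv (-(a+c)) m d)"
        unfolding prodAP_def sc_def rr.simps e e'
        by (rule ext) (simp add: algebra_simps)
      finally show ?thesis .
    qed
    then show ?thesis unfolding L .
  qed
qed

definition Zq :: "int \<Rightarrow> int \<Rightarrow> 'a::field hvec" where
  "Zq e a = (\<lambda>d. Qv (e+1) a d - Qv (e-1) a d)"

lemma Zq_even: "Zq e (- n) = Zq e n" by (simp add: Zq_def Qv_even)
lemma Zq_0: "Zq e 0 = 0" by (rule ext) (simp add: Zq_def)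
lemma Zq_zv: "Zq e a = zv e (nat \<bar>a\<bar>)" by (rule ext) (simp add: Zq_def zv_def Qv_def)
lemma hsupp_diff: "hsupp (u - v :: 'a::field hvec) \<subseteq> hsupp u \<union> hsupp v"
  by (auto simp: hsupp_def)
lemma hsupp_add: "hsupp (u + v :: 'a::field hvec) \<subseteq> hsupp u \<union> hsupp v"
  by (auto simp: hsupp_def)
lemma hsupp_uminus: "hsupp (- u :: 'a::field hvec) = hsupp u"
  by (auto simp: hsupp_def)
lemma fin_diff: "finite (hsupp u) \<Longrightarrow> finite (hsupp v) \<Longrightarrow> finite (hsupp (u - v :: 'a::field hvec))"
  by (meson finite_UnI finite_subset hsupp_diff)
lemma fin_add: "finite (hsupp u) \<Longrightarrow> finite (hsupp v) \<Longrightarrow> finite (hsupp (u + v :: 'a::field hvec))"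
  by (meson finite_UnI finite_subset hsupp_add)

lemma fin_Zq[simp]: "finite (hsupp (Zq e a :: 'a::field hvec))"
  unfolding Zq_zv zv_def by (intro fin_diff fin_pv)

lemma zv_cong: "e mod 3 = e' mod 3 \<Longrightarrow> zv e = zv e'"
proof -
  assume a: "e mod 3 = e' mod 3"
  have "(e+1) mod 3 = (e'+1) mod 3" "(e-1) mod 3 = (e'-1) mod 3" using a by presburger+
  then show ?thesis by (simp add: zv_def[abs_def] pv_cong[of "e+1" "e'+1"] pv_cong[of "e-1" "e'-1"])
qed

lemma Zq_cong: assumes "e mod 3 = e' mod 3" shows "Zq e = Zq e'"
  by (rule ext) (simp add: Zq_zv zv_cong[OF assms])

lemma zv_sum3f: "zv (-r) n = (- zv (-(r+1)) n - zv (-(r+2)) n :: 'a::field hvec)"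
proof -
  define f where "f k = (pv (-r + k) n :: 'a hvec)" for k :: int
  have pa: "\<And>a b. a = b \<Longrightarrow> pv a n = (pv b n :: 'a hvec)" by simp
  have z1: "zv (-r) n = f 1 - f (-1)" unfolding zv_def f_def by (intro arg_cong2[where f="(-)"] pa) simp_all
  have z2: "zv (-(r+1)) n = f 0 - f (-2)" unfolding zv_def f_def by (intro arg_cong2[where f="(-)"] pa) simp_all
  have z3: "zv (-(r+2)) n = f (-1) - f (-3)" unfolding zv_def f_def by (intro arg_cong2[where f="(-)"] pa) simp_all
  have a1: "f (-1) = pv (-r-1) n" "f 0 = pv (-r-1+1) n" "f 1 = pv (-r-1+2) n"
    unfolding f_def by (rule pa, simp)+
  have A: "f (-1) + f 0 + f 1 = 0" unfolding a1 by (rule pv_sum3)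
  have b1: "f (-3) = pv (-r-3) n" "f (-2) = pv (-r-3+1) n" "f (-1) = pv (-r-3+2) n"
    unfolding f_def by (rule pa, simp)+
  have B: "f (-3) + f (-2) + f (-1) = 0" unfolding b1 by (rule pv_sum3)
  have A': "f 1 = - f (-1) - f 0" using A by (simp add: algebra_simps eq_neg_iff_add_eq_0)
  have B': "f (-3) = - f (-2) - f (-1)" using B by (simp add: algebra_simps eq_neg_iff_add_eq_0)
  show ?thesis unfolding z1 z2 z3 A' B' by (simp add: algebra_simps)
qed

lemma LP:
  fixes c :: int and n :: int and h :: nat
  assumes h: "0 < h" "3 dvd h" and n: "3 dvd n" and two: "(2::'a::field) \<noteq> 0" and three: "(3::'a) \<noteq> 0"
  shows "hmult (ev (P t h)) (Qv c n :: 'a hvec) = (\<lambda>d. 1/3 * Mform (Zq (-(rr t + c))) (int h) n d)"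
proof -
  define m where "m = nat \<bar>n\<bar>"
  have m3: "3 dvd m" using n by (simp add: m_def)
  have L: "Qv c n = (pv c m :: 'a hvec)" by (simp add: Qv_def m_def)
  have R: "\<And>e. Mform (Zq e) (int h) n = Mform (Zq e :: int \<Rightarrow> 'a hvec) (int h) (int m)"
    unfolding m_def by (cases "n \<ge> 0") (auto simp: Mform_even Zq_even)
  show ?thesis
  proof (cases "m = 0")
    case True
    then show ?thesis unfolding L R
      using Mform_zero[of "Zq (-(rr t + c))", OF Zq_even Zq_0 two]
      by (simp add: pv_inv hmult_ev_zero) (simp add: zero_fun_def)
  next
    case False
    then have m0: "0 < m" by simp
    have hm: "nat (int h + int m) = h + m" by simp
    have k: "\<And>x. (1/3) * ((3/4) * x) = (1/4::'a) * x" "\<And>x. (1/3) * ((3/8) * x) = (1/8::'a) * x"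
      using three two_pows[OF two] by (simp_all add: field_simps)
    have "hmult (ev (P t h)) (pv c m :: 'a hvec) = (\<lambda>d. 1/3 * Mform (Zq (-(rr t + c))) (int h) (int m) d)"
    proof (cases c rule: mod3_cases)
      case 1
      have e: "Zq (-(rr t + c)) = (Zq (-(rr t)) :: int \<Rightarrow> 'a hvec)" by (rule Zq_cong) (use 1 in presburger)
      have "hmult (ev (P t h)) (pv c m :: 'a hvec) = - bprod (P t h) (P True m) - bprod (P t h) (P False m)"
        using 1 by (simp add: hmult_pv[OF m0 m3])
      also have "\<dots> = (\<lambda>d. 1/3 * Mform (Zq (-(rr t + c))) (int h) (int m) d)"
        unfolding e bprod.simps Mform_def Zq_zv rr.simps zv_sum3f[of "rr t"] sc_def
        by (rule ext) (simp add: hm ring_distribs k three)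
      finally show ?thesis .
    next
      case 2
      have e: "Zq (-(rr t + c)) = (Zq (-(rr t + 1)) :: int \<Rightarrow> 'a hvec)" by (rule Zq_cong) (use 2 in presburger)
      have "hmult (ev (P t h)) (pv c m :: 'a hvec) = bprod (P t h) (P True m)"
        using 2 by (simp add: hmult_pv[OF m0 m3])
      also have "\<dots> = (\<lambda>d. 1/3 * Mform (Zq (-(rr t + c))) (int h) (int m) d)"
        unfolding e bprod.simps Mform_def Zq_zv rr.simps sc_def
        by (rule ext) (simp add: hm ring_distribs k three)
      finally show ?thesis .
    next
      case 3
      have e: "Zq (-(rr t + c)) = (Zq (-(rr t + 2)) :: int \<Rightarrow> 'a hvec)" by (rule Zq_cong) (use 3 in presburger)
      have "hmult (ev (P t h)) (pv c m :: 'a hvec) = bprod (P t h) (P False m)"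
        using 3 by (simp add: hmult_pv[OF m0 m3])
      also have "\<dots> = (\<lambda>d. 1/3 * Mform (Zq (-(rr t + c))) (int h) (int m) d)"
        unfolding e bprod.simps Mform_def Zq_zv rr.simps sc_def
        by (rule ext) (simp add: hm ring_distribs k three)
      finally show ?thesis .
    qed
    then show ?thesis unfolding L R .
  qed
qed

lemma hmult_ev_scale:
  fixes v :: "'a::field hvec"
  assumes "finite (hsupp v)"
  shows "hmult (ev b) (\<lambda>d. a * v d) = (\<lambda>c. a * hmult (ev b) v c)"
proof -
  have "hsupp (\<lambda>d. a * v d) \<subseteq> hsupp v" by (auto simp: hsupp_def)
  then show ?thesis
    by (subst hmult_ev[OF assms]) (auto simp: hmult_ev[OF assms] sum_distrib_left mult.assoc)
qed

lemma tau0_lincomb: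
  "tau0 (\<lambda>d. \<Sum>j\<in>F. a j * f j d) = (\<lambda>d. \<Sum>j\<in>F. a j * tau0 (f j) d)"
  by (rule ext) (auto simp: tau0_def sum_negf split: hidx.split)

lemma tau0_Qv: "tau0 (Qv c n) = - Qv (-c) n"
  by (simp add: Qv_def tau0_pv)

lemma tau0_Mform: assumes two: "(2::'a::field) \<noteq> 0" shows "tau0 (Mform q i n :: 'a hvec) = Mform (\<lambda>a. tau0 (q a)) i n"
  by (rule ext) (use two_pows[OF two] two in \<open>auto simp: tau0_def Mform_def field_simps split: hidx.split\<close>)

lemma Mform_neg: assumes two: "(2::'a::field) \<noteq> 0" shows "Mform (\<lambda>a. - q a) i n = (\<lambda>d. - Mform q i n d :: 'a)"
  by (rule ext) (use two_pows[OF two] two in \<open>simp add: Mform_def field_simps\<close>)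

lemma Mform_i0:
  assumes ev: "\<And>n. q (- n) = q n" and z: "q 0 = 0" and two: "(2::'a::field) \<noteq> 0"
  shows "Mform (q :: int \<Rightarrow> 'a hvec) 0 n = 0"
  by (rule ext) (use two_pows[OF two] two in \<open>simp add: Mform_def z ev field_simps\<close>)

lemma Mform_even1:
  assumes ev: "\<And>n. q (- n) = q n"
  shows "Mform q (- i) n = Mform q i n"
proof -
  have "q (- i - n) = q (i + n)" "q (- i + n) = q (i - n)" using ev[of "i+n"] ev[of "i - n"] by (simp_all add: algebra_simps)
  then show ?thesis using ev[of i] by (simp add: Mform_def algebra_simps)
qed

context
  fixes \<beta> :: "nat \<Rightarrow> 'a::field" and k :: nat
begin

definition Xv :: "int \<Rightarrow> 'a hvec" where
  "Xv c = (\<lambda>d. \<Sum>j\<in>{1..k}. \<beta> (3*j) * Qv c (int (3*j)) d)"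

definition Yv :: "int \<Rightarrow> int \<Rightarrow> 'a hvec" where
  "Yv c i = (\<lambda>d. \<Sum>j\<in>{1..k}. \<beta> (3*j) * Mform (Qv c) i (int (3*j)) d)"

lemma fin_Xv[simp]: "finite (hsupp (Xv c))"
  unfolding Xv_def by (rule finite_subset[OF hsupp_lincomb]) simp

lemma fin_Yv[simp]: "finite (hsupp (Yv c i))"
  unfolding Yv_def by (rule finite_subset[OF hsupp_lincomb]) (simp add: fin_Mform)

lemma Xv_mod: "Xv (c mod 3) = Xv c" by (simp add: Xv_def Qv_mod)
lemma Yv_mod: "Yv (c mod 3) i = Yv c i" by (simp add: Yv_def Qv_mod)

lemma Qv_0c: "Qv 0 n = (\<lambda>d. - Qv 1 n d - Qv 2 n d)"
  by (rule ext) (simp add: Qv_def pv_0)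

lemma Xv_0: "Xv 0 = (\<lambda>d. - Xv 1 d - Xv 2 d)"
  by (rule ext) (simp add: Xv_def Qv_0c algebra_simps sum_subtractf sum.distrib sum_negf)

lemma Yv_0: "Yv 0 i = (\<lambda>d. - Yv 1 i d - Yv 2 i d)"
  by (rule ext) (simp add: Yv_def Qv_0c Mform_def algebra_simps sum_subtractf sum.distrib sum_negf)

lemma tau0_Xv: "tau0 (Xv c) = (\<lambda>d. - Xv (-c) d)"
  unfolding Xv_def tau0_lincomb tau0_Qv by (simp add: sum_negf)

lemma tau0_Yv: "(2::'a) \<noteq> 0 \<Longrightarrow> tau0 (Yv c i) = (\<lambda>d. - Yv (-c) i d)"
  unfolding Yv_def tau0_lincomb by (simp add: tau0_Mform tau0_Qv Mform_neg sum_negf)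

lemma Yv_neg: "Yv c (- i) = Yv c i"
  unfolding Yv_def by (simp add: Mform_even1 Qv_even)

lemma Yv_zero: "(2::'a) \<noteq> 0 \<Longrightarrow> Yv c 0 = 0"
  unfolding Yv_def by (rule ext) (simp add: Mform_i0[OF Qv_even Qv_0])

lemma Yv_nd:
  assumes "\<not> 3 dvd i"
  shows "Yv c i = (\<lambda>d. 3/4 * Xv c d)"
proof -
  have z: "Qv c i = 0" "\<And>j. Qv c (i - int (3*j)) = 0" "\<And>j. Qv c (i + int (3*j)) = 0"
    using assms by (auto intro!: Qv_inv) presburger+
  show ?thesis
    unfolding Yv_def Xv_def Mform_def z by (rule ext) (simp add: sum_distrib_left algebra_simps)
qed

end

lemma Mform_cong:
  assumes "q i = q' i" "q n = q' n" "q (i - n) = q' (i - n)" "q (i + n) = q' (i + n)"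
  shows "Mform q i n = Mform q' i n"
  using assms by (simp add: Mform_def)

lemma Mform_Zq: "Mform (Zq e) i n = (\<lambda>d. Mform (Qv (e+1)) i n d - Mform (Qv (e-1)) i n d)"
  by (rule ext) (simp add: Mform_def Zq_def algebra_simps)

lemma Mform_cong3:
  assumes "\<And>x. 3 dvd x \<Longrightarrow> q x = q' x" "3 dvd i" "3 dvd n"
  shows "Mform q i n = Mform q' i n"
  by (rule Mform_cong) (use assms in auto)

lemma Mform_lin: assumes two: "(2::'a::field) \<noteq> 0"
  shows "Mform (\<lambda>a d. x * q1 a d - q2 a d) i n = (\<lambda>d. x * Mform q1 i n d - Mform q2 i n d :: 'a)"
  by (rule ext) (use two_pows[OF two] two in \<open>simp add: Mform_def field_simps\<close>)

lemma Mform_scale: assumes two: "(2::'a::field) \<noteq> 0"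
  shows "Mform (\<lambda>a d. x * q a d) i n = (\<lambda>d. x * Mform q i n d :: 'a)"
  by (rule ext) (use two_pows[OF two] two in \<open>simp add: Mform_def field_simps\<close>)

context
  fixes \<beta> :: "nat \<Rightarrow> 'a::field" and k :: nat
  assumes two: "(2::'a) \<noteq> 0" and three: "(3::'a) \<noteq> 0"
begin

lemma hmult_Xv: "hmult (ev b) (Xv \<beta> k c) = (\<lambda>d. \<Sum>j\<in>{1..k}. \<beta> (3*j) * hmult (ev b) (Qv c (int (3*j))) d)"
  unfolding Xv_def by (rule hmult_lincomb) simp_all

lemma hmult_Yv: "hmult (ev b) (Yv \<beta> k c i) =
   (\<lambda>d. \<Sum>j\<in>{1..k}. \<beta> (3*j) * Mform (\<lambda>a. hmult (ev b) (Qv c a)) i (int (3*j)) d)"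
  unfolding Yv_def by (subst hmult_lincomb) (simp_all add: fin_Mform hmult_Mform)

lemma d3: "3 dvd int (3 * j)" by simp

lemma XA: "hmult (ev (A a)) (Xv \<beta> k c) = (\<lambda>d. 3/2 * Xv \<beta> k c d - Xv \<beta> k (-(a+c)) d)"
proof -
  have "\<And>j. hmult (ev (A a)) (Qv c (int (3*j))) = (\<lambda>d. 3/2 * Qv c (int (3*j)) d - Qv (-(a+c)) (int (3*j)) d :: 'a)"
    by (rule LA) simp
  then show ?thesis unfolding hmult_Xv
    by (simp add: Xv_def ring_distribs sum_subtractf sum_distrib_left mult.left_commute)
qed

lemma XS: assumes "0 < j" shows "hmult (ev (S j)) (Xv \<beta> k c) = Yv \<beta> k c (int j)"
proof -
  have "\<And>i. hmult (ev (S j)) (Qv c (int (3*i))) = (Mform (Qv c) (int j) (int (3*i)) :: 'a hvec)"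
    by (rule LS[OF assms _ two]) simp
  then show ?thesis unfolding hmult_Xv Yv_def by simp
qed

lemma XP: assumes "0 < h" "3 dvd h" shows "hmult (ev (P t h)) (Xv \<beta> k c)
   = (\<lambda>d. 1/3 * (Yv \<beta> k (-(rr t + c) + 1) (int h) d - Yv \<beta> k (-(rr t + c) - 1) (int h) d))"
proof -
  have "\<And>i. hmult (ev (P t h)) (Qv c (int (3*i))) = (\<lambda>d. 1/3 * Mform (Zq (-(rr t + c))) (int h) (int (3*i)) d :: 'a)"
    by (rule LP[OF assms _ two three]) simp
  then show ?thesis unfolding hmult_Xv Yv_def Mform_Zq
    by (simp add: ring_distribs sum_subtractf sum_distrib_left mult.left_commute)
qed

lemma YA: assumes i: "3 dvd i"
  shows "hmult (ev (A a)) (Yv \<beta> k c i) = (\<lambda>d. 3/2 * Yv \<beta> k c i d - Yv \<beta> k (-(a+c)) i d)"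
proof -
  have "\<And>j. Mform (\<lambda>x. hmult (ev (A a)) (Qv c x)) i (int (3*j))
     = Mform (\<lambda>x d. 3/2 * Qv c x d - Qv (-(a+c)) x d :: 'a) i (int (3*j))"
    by (rule Mform_cong3) (auto simp: LA i)
  then show ?thesis unfolding hmult_Yv Mform_lin[OF two]
    by (simp add: Yv_def ring_distribs sum_subtractf sum_distrib_left mult.left_commute)
qed

lemma YS: assumes j: "0 < j" and i: "3 dvd i"
  shows "hmult (ev (S j)) (Yv \<beta> k c i) = (\<lambda>d. 3/4 * (Yv \<beta> k c i d + Yv \<beta> k c (int j) d)
     - 3/8 * (Yv \<beta> k c (i + int j) d + Yv \<beta> k c (i - int j) d))"
proof -
  have "\<And>m. Mform (\<lambda>x. hmult (ev (S j)) (Qv c x)) i (int (3*m))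
     = Mform (\<lambda>x. Mform (Qv c) (int j) x :: 'a hvec) i (int (3*m))"
    by (rule Mform_cong3) (auto simp: LS[OF j _ two] i)
  then show ?thesis unfolding hmult_Yv
    by (simp add: key_hvec[of "Qv c", OF Qv_even two] Yv_def ring_distribs sum_subtractf sum.distrib sum_distrib_left mult.left_commute)
qed

lemma YP: assumes h: "0 < h" "3 dvd h" and i: "3 dvd i"
  shows "hmult (ev (P t h)) (Yv \<beta> k c i) = (\<lambda>d. 1/3 * (3/4 *
      ((Yv \<beta> k (-(rr t + c) + 1) i d - Yv \<beta> k (-(rr t + c) - 1) i d)
      + (Yv \<beta> k (-(rr t + c) + 1) (int h) d - Yv \<beta> k (-(rr t + c) - 1) (int h) d))
     - 3/8 * ((Yv \<beta> k (-(rr t + c) + 1) (i + int h) d - Yv \<beta> k (-(rr t + c) - 1) (i + int h) d)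
      + (Yv \<beta> k (-(rr t + c) + 1) (i - int h) d - Yv \<beta> k (-(rr t + c) - 1) (i - int h) d))))"
proof -
  define e where "e = -(rr t + c)"
  have "\<And>m. Mform (\<lambda>x. hmult (ev (P t h)) (Qv c x)) i (int (3*m))
     = Mform (\<lambda>x d. 1/3 * Mform (Zq e) (int h) x d :: 'a) i (int (3*m))"
    unfolding e_def by (rule Mform_cong3) (auto simp: LP[OF h _ two three] i)
  also have "\<And>m. Mform (\<lambda>x d. 1/3 * Mform (Zq e) (int h) x d :: 'a) i (int (3*m))
     = (\<lambda>d. 1/3 * (3/4 * (Mform (Zq e) i (int (3*m)) d + Mform (Zq e) (int h) (int (3*m)) d)
         - 3/8 * (Mform (Zq e) (i + int h) (int (3*m)) d + Mform (Zq e) (i - int h) (int (3*m)) d)))"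
    unfolding Mform_scale[OF two] key_hvec[of "Zq e", OF Zq_even two] ..
  finally have X: "\<And>m. Mform (\<lambda>x. hmult (ev (P t h)) (Qv c x :: 'a hvec)) i (int (3*m)) =
     (\<lambda>d. 1/3 * (3/4 * (Mform (Zq e) i (int (3*m)) d + Mform (Zq e) (int h) (int (3*m)) d)
         - 3/8 * (Mform (Zq e) (i + int h) (int (3*m)) d + Mform (Zq e) (i - int h) (int (3*m)) d)))" .
  show ?thesis unfolding hmult_Yv X Mform_Zq e_def[symmetric]
    by (simp add: three Yv_def ring_distribs sum_subtractf sum.distrib sum_distrib_left mult.left_commute)
qed

end

lemma hmult_ev_neg:
  fixes v :: "'a::field hvec"
  assumes "finite (hsupp v)"
  shows "hmult (ev b) (\<lambda>d. - v d) = (\<lambda>c. - hmult (ev b) v c)"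
  using hmult_ev_scale[OF assms, of b "-1"] by simp

lemma hsupp_neg: "hsupp (\<lambda>d. - v d :: 'a::field) = hsupp v"
  by (simp add: hsupp_def)

lemma ev_Hcarrier: "hvalid b \<Longrightarrow> ev b \<in> Hcarrier"
  by (simp add: Hcarrier_def)

context
  fixes \<beta> :: "nat \<Rightarrow> 'a::field" and k :: nat
  assumes two: "(2::'a) \<noteq> 0" and three: "(3::'a) \<noteq> 0"
begin

definition gg :: "nat \<times> bool \<Rightarrow> 'a hvec" where
  "gg = (\<lambda>(i, t). (if t then tau0 else id) (if i = 0 then Xv \<beta> k 1 else hmult (sv i) (Xv \<beta> k 1)))"

definition JJ :: "(nat \<times> bool) set" where "JJ = {(i, t). 3 dvd i}"

abbreviation "W \<equiv> hspan gg JJ"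

lemma Xv_m1': "Xv \<beta> k (-1) = Xv \<beta> k 2"
proof -
  have "(-1::int) mod 3 = 2 mod 3" by simp
  then show ?thesis by (metis Xv_mod)
qed

lemma Yv_m1: "Yv \<beta> k (-1) i = Yv \<beta> k 2 i"
proof -
  have "(-1::int) mod 3 = 2 mod 3" by simp
  then show ?thesis by (metis Yv_mod)
qed

lemma gg_0F: "gg (0, False) = Xv \<beta> k 1" by (simp add: gg_def)
lemma gg_0T: "gg (0, True) = (\<lambda>d. - Xv \<beta> k 2 d)" by (simp add: gg_def tau0_Xv Xv_m1')
lemma gg_iF: "0 < i \<Longrightarrow> gg (i, False) = Yv \<beta> k 1 (int i)"
  by (simp add: gg_def sv_def XS[OF two three])
lemma gg_iT: "0 < i \<Longrightarrow> gg (i, True) = (\<lambda>d. - Yv \<beta> k 2 (int i) d)"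
  by (simp add: gg_def sv_def XS[OF two three] tau0_Yv[OF two] Yv_m1)

lemma fin_gg: "finite (hsupp (gg j))"
proof -
  obtain i t where j: "j = (i, t)" by fastforce
  show ?thesis unfolding j
    by (cases t; cases "i = 0") (simp_all add: gg_0F gg_0T gg_iF gg_iT hsupp_neg)
qed

lemma W_zero: "0 \<in> W"
  unfolding hspan_def by (rule CollectI, rule exI[of _ "{}"]) (auto simp: zero_fun_def)

lemma W_add:
  assumes "u \<in> W" "v \<in> W"
  shows "(\<lambda>d. u d + v d) \<in> W"
proof -
  obtain F1 c1 where 1: "finite F1" "F1 \<subseteq> JJ" "u = (\<lambda>b. \<Sum>j\<in>F1. c1 j * gg j b)"
    using assms(1) unfolding hspan_def by blast
  obtain F2 c2 where 2: "finite F2" "F2 \<subseteq> JJ" "v = (\<lambda>b. \<Sum>j\<in>F2. c2 j * gg j b)"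
    using assms(2) unfolding hspan_def by blast
  define c where "c j = (if j \<in> F1 then c1 j else 0) + (if j \<in> F2 then c2 j else 0)" for j
  have "(\<lambda>d. u d + v d) = (\<lambda>b. \<Sum>j\<in>F1 \<union> F2. c j * gg j b)"
  proof
    fix b
    have "(\<Sum>j\<in>F1 \<union> F2. c j * gg j b) = (\<Sum>j\<in>F1 \<union> F2. (if j \<in> F1 then c1 j * gg j b else 0))
       + (\<Sum>j\<in>F1 \<union> F2. (if j \<in> F2 then c2 j * gg j b else 0))"
      by (subst sum.distrib[symmetric], rule sum.cong) (auto simp: c_def ring_distribs)
    also have "\<dots> = (\<Sum>j\<in>(F1 \<union> F2) \<inter> F1. c1 j * gg j b) + (\<Sum>j\<in>(F1 \<union> F2) \<inter> F2. c2 j * gg j b)"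
      using 1 2 by (simp only: sum.inter_restrict finite_Un)
    also have "\<dots> = (\<Sum>j\<in>F1. c1 j * gg j b) + (\<Sum>j\<in>F2. c2 j * gg j b)"
      by (simp only: Int_absorb1 Int_absorb2 Un_upper1 Un_upper2 Int_commute[of "F1 \<union> F2"])
    finally show "u b + v b = (\<Sum>j\<in>F1 \<union> F2. c j * gg j b)" using 1 2 by simp
  qed
  then show ?thesis unfolding hspan_def
    by (intro CollectI exI[of _ "F1 \<union> F2"] exI[of _ c] conjI) (use 1 2 in auto)
qed

lemma W_scale:
  assumes "u \<in> W"
  shows "(\<lambda>d. a * u d) \<in> W"
proof -
  obtain F c where 1: "finite F" "F \<subseteq> JJ" "u = (\<lambda>b. \<Sum>j\<in>F. c j * gg j b)"
    using assms(1) unfolding hspan_def by blast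
  have "(\<lambda>d. a * u d) = (\<lambda>b. \<Sum>j\<in>F. (a * c j) * gg j b)"
    using 1 by (simp add: sum_distrib_left mult.assoc)
  then show ?thesis unfolding hspan_def
    by (intro CollectI exI[of _ F] exI[of _ "\<lambda>j. a * c j"] conjI) (use 1 in auto)
qed

lemma W_neg: "u \<in> W \<Longrightarrow> (\<lambda>d. - u d) \<in> W"
  using W_scale[of u "-1"] by simp

lemma W_diff: "u \<in> W \<Longrightarrow> v \<in> W \<Longrightarrow> (\<lambda>d. u d - v d) \<in> W"
  using W_add[of u "\<lambda>d. - v d"] W_neg[of v] by simp

lemma W_lincomb:
  assumes "finite B" "\<And>b. b \<in> B \<Longrightarrow> w b \<in> W"
  shows "(\<lambda>d. \<Sum>b\<in>B. a b * w b d) \<in> W"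
  using assms
proof (induction B rule: finite_induct)
  case empty
  then show ?case using W_zero by (simp add: zero_fun_def)
next
  case (insert x F)
  then have "(\<lambda>d. a x * w x d + (\<Sum>b\<in>F. a b * w b d)) \<in> W"
    by (intro W_add W_scale) auto
  then show ?case using insert by simp
qed

lemma gg_W: "j \<in> JJ \<Longrightarrow> gg j \<in> W"
proof -
  assume "j \<in> JJ"
  have "gg j = (\<lambda>b. \<Sum>i\<in>{j}. 1 * gg i b)" by simp
  then show ?thesis unfolding hspan_def
    by (intro CollectI exI[of _ "{j}"] exI[of _ "\<lambda>_. 1"] conjI) (use \<open>j \<in> JJ\<close> in auto)
qed

lemma fin_W: "v \<in> W \<Longrightarrow> finite (hsupp v)"
proof -
  assume "v \<in> W"
  then obtain F c where 1: "finite F" "v = (\<lambda>b. \<Sum>j\<in>F. c j * gg j b)"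
    unfolding hspan_def by blast
  have "finite (\<Union>j\<in>F. hsupp (gg j))" using 1 fin_gg by simp
  then show ?thesis unfolding 1 by (rule finite_subset[OF hsupp_lincomb])
qed

end

context
  fixes \<beta> :: "nat \<Rightarrow> 'a::field" and k :: nat
  assumes two: "(2::'a) \<noteq> 0" and three: "(3::'a) \<noteq> 0"
begin

lemma JJI: "3 dvd i \<Longrightarrow> (i, t) \<in> JJ" by (simp add: JJ_def[OF two three])

abbreviation "WW \<equiv> hspan (gg \<beta> k) JJ"

lemma XW: "Xv \<beta> k c \<in> WW"
proof -
  have X1: "Xv \<beta> k 1 \<in> WW" using gg_W[OF two three, where j="(0, False)", OF JJI[of 0]] by (simp add: gg_0F[OF two three])
  have "(\<lambda>d. - Xv \<beta> k 2 d) \<in> WW" using gg_W[OF two three, where j="(0, True)", OF JJI[of 0]] by (simp add: gg_0T[OF two three])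
  from W_neg[OF two three this] have X2: "Xv \<beta> k 2 \<in> WW" by simp
  have X0: "Xv \<beta> k 0 \<in> WW" unfolding Xv_0 by (intro W_diff[OF two three] W_neg[OF two three] X1 X2)
  show ?thesis
  proof (cases c rule: mod3_cases)
    case 1 then show ?thesis using X0 Xv_mod[of \<beta> k c] by simp
  next
    case 2 then show ?thesis using X1 Xv_mod[of \<beta> k c] by simp
  next
    case 3 then show ?thesis using X2 Xv_mod[of \<beta> k c] by simp
  qed
qed

lemma YW: "Yv \<beta> k c i \<in> WW"
proof (cases "3 dvd i")
  case False
  then show ?thesis unfolding Yv_nd[OF False] by (intro W_scale[OF two three] XW)
next
  case True
  show ?thesis
  proof (cases "i = 0")
    case True
    then show ?thesis using W_zero[OF two three] Yv_zero[OF two] by simp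
  next
    case False
    define n where "n = nat \<bar>i\<bar>"
    have n0: "0 < n" "3 dvd n" using False \<open>3 dvd i\<close> by (auto simp: n_def)
    have Yi: "Yv \<beta> k c i = Yv \<beta> k c (int n)"
      by (cases "i \<ge> 0") (auto simp: n_def Yv_neg[of \<beta> k c "-i", symmetric])
    have Y1: "Yv \<beta> k 1 (int n) \<in> WW" using gg_W[OF two three, where j="(n, False)", OF JJI[of n]] n0 by (simp add: gg_iF[OF two three])
    have "(\<lambda>d. - Yv \<beta> k 2 (int n) d) \<in> WW" using gg_W[OF two three, where j="(n, True)", OF JJI[of n]] n0 by (simp add: gg_iT[OF two three])
    from W_neg[OF two three this] have Y2: "Yv \<beta> k 2 (int n) \<in> WW" by simp
    have Y0: "Yv \<beta> k 0 (int n) \<in> WW" unfolding Yv_0 by (intro W_diff[OF two three] W_neg[OF two three] Y1 Y2)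
    have "Yv \<beta> k c (int n) \<in> WW"
    proof (cases c rule: mod3_cases)
      case 1 then show ?thesis using Y0 Yv_mod[of \<beta> k c] by metis
    next
      case 2 then show ?thesis using Y1 Yv_mod[of \<beta> k c] by metis
    next
      case 3 then show ?thesis using Y2 Yv_mod[of \<beta> k c] by metis
    qed
    then show ?thesis using Yi by simp
  qed
qed

lemmas Wintro = W_add[OF two three] W_diff[OF two three] W_scale[OF two three] W_neg[OF two three] XW YW

lemma LbX: "hvalid b \<Longrightarrow> hmult (ev b) (Xv \<beta> k c) \<in> WW"
proof (cases b)
  case (A a)
  then show ?thesis unfolding A XA[OF two three] by (intro Wintro)
next
  case (S j)
  assume "hvalid b"
  then show ?thesis using S by (simp add: XS[OF two three] YW)
next
  case (P t h)
  assume "hvalid b"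
  then have h: "0 < h" "3 dvd h" using P by auto
  show ?thesis unfolding P XP[OF two three h] by (intro Wintro)
qed

lemma LbY: "hvalid b \<Longrightarrow> hmult (ev b) (Yv \<beta> k c i) \<in> WW"
proof (cases "3 dvd i")
  case False
  assume "hvalid b"
  then show ?thesis unfolding Yv_nd[OF False] hmult_ev_scale[OF fin_Xv]
    by (intro Wintro LbX)
next
  case True
  assume v: "hvalid b"
  show ?thesis
  proof (cases b)
    case (A a)
    then show ?thesis unfolding A YA[OF two three True] by (intro Wintro)
  next
    case (S j)
    then have j: "0 < j" using v by auto
    show ?thesis unfolding S YS[OF two three j True] by (intro Wintro)
  next
    case (P t h)
    then have h: "0 < h" "3 dvd h" using v by auto
    show ?thesis unfolding P YP[OF two three h True] by (intro Wintro)
  qed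
qed

lemma Lbgg: "hvalid b \<Longrightarrow> j \<in> JJ \<Longrightarrow> hmult (ev b) (gg \<beta> k j) \<in> WW"
proof -
  assume v: "hvalid b"
  obtain i t where j: "j = (i, t)" by fastforce
  show ?thesis unfolding j
    by (cases t; cases "i = 0")
       (simp_all add: gg_0F[OF two three] gg_0T[OF two three] gg_iF[OF two three] gg_iT[OF two three]
          hmult_ev_neg LbX[OF v] LbY[OF v] W_neg[OF two three])
qed

lemma ideal_sub: "v \<in> hideal (Xv \<beta> k 1) \<Longrightarrow> v \<in> WW"
proof (induction rule: hideal.induct)
  case gen
  then show ?case using gg_W[OF two three, where j="(0, False)", OF JJI[of 0]] by (simp add: gg_0F[OF two three])
next
  case zero
  then show ?case by (rule W_zero[OF two three])
next
  case (add u v)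
  then show ?case using W_add[OF two three add.IH] by (simp add: plus_fun_def)
next
  case (smult v c)
  then show ?case using W_scale[OF two three smult.IH, of c] by (simp add: sc_def)
next
  case (mult y v)
  from mult.IH obtain F c where F: "finite F" "F \<subseteq> JJ" "v = (\<lambda>b. \<Sum>j\<in>F. c j * gg \<beta> k j b)"
    unfolding hspan_def by blast
  have fy: "finite (hsupp y)" and vy: "\<And>b. b \<in> hsupp y \<Longrightarrow> hvalid b"
    using mult.hyps by (auto simp: Hcarrier_def)
  have "\<And>b. b \<in> hsupp y \<Longrightarrow> hmult (ev b) v \<in> WW"
  proof -
    fix b assume b: "b \<in> hsupp y"
    have "hmult (ev b) v = (\<lambda>d. \<Sum>j\<in>F. c j * hmult (ev b) (gg \<beta> k j) d)"
      unfolding F(3) by (rule hmult_lincomb) (use F fin_gg[OF two three] in auto)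
    also have "\<dots> \<in> WW"
      by (intro W_lincomb[OF two three] F(1) Lbgg vy b) (use F in auto)
    finally show "hmult (ev b) v \<in> WW" .
  qed
  then show ?case unfolding hmult_left[of y v]
    by (intro W_lincomb[OF two three] fy)
qed

end

lemma Qv1_PT: "Qv 1 n (P True m) = (if nat \<bar>n\<bar> = m \<and> 0 < m \<and> 3 dvd m then 1 else (0::'a::field))"
  by (auto simp: Qv_def pv_def ev_def)
lemma Qv1_PF: "Qv 1 n (P False m) = (0::'a::field)"
  by (auto simp: Qv_def pv_def ev_def)

lemma Mterm:
  fixes i j m :: nat
  assumes "0 < i" "1 \<le> j" "j \<le> k" "i + 3 * k \<le> m" "3 dvd m"
  shows "Mform (Qv 1) (int i) (int (3*j)) (P True m) = (if j = k \<and> m = i + 3 * k then - 3/8 else (0::'a::field))"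
proof -
  have a: "nat \<bar>int i\<bar> \<noteq> m" "nat \<bar>int (3*j)\<bar> \<noteq> m" "nat \<bar>int i - int (3*j)\<bar> \<noteq> m"
    using assms by auto
  have b: "(nat \<bar>int i + int (3*j)\<bar> = m) = (j = k \<and> m = i + 3 * k)"
    using assms by auto
  show ?thesis
    unfolding Mform_def Qv1_PT a b if_False using assms by auto
qed

context
  fixes \<beta> :: "nat \<Rightarrow> 'a::field" and k :: nat
  assumes two: "(2::'a) \<noteq> 0" and three: "(3::'a) \<noteq> 0"
begin

lemma VY:
  assumes "0 < i" "i + 3 * k \<le> m" "3 dvd m" "1 \<le> k"
  shows "Yv \<beta> k 1 (int i) (P True m) = (if m = i + 3 * k then - 3/8 * \<beta> (3 * k) else 0)"
proof -
  have "Yv \<beta> k 1 (int i) (P True m) = (\<Sum>j\<in>{1..k}. \<beta> (3*j) * Mform (Qv 1) (int i) (int (3*j)) (P True m))"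
    by (simp add: Yv_def)
  also have "\<dots> = (\<Sum>j\<in>{1..k}. if j = k then (if m = i + 3 * k then - 3/8 * \<beta> (3 * k) else 0) else 0)"
  proof (rule sum.cong[OF refl])
    fix j assume j: "j \<in> {1..k}"
    have "Mform (Qv 1) (int i) (int (3*j)) (P True m) = (if j = k \<and> m = i + 3 * k then - 3/8 else (0::'a))"
      by (rule Mterm) (use assms j in auto)
    then show "\<beta> (3*j) * Mform (Qv 1) (int i) (int (3*j)) (P True m) = (if j = k then (if m = i + 3 * k then - 3/8 * \<beta> (3 * k) else 0) else 0)"
      by simp
  qed
  also have "\<dots> = (if m = i + 3 * k then - 3/8 * \<beta> (3 * k) else 0)"
    using assms by (simp add: sum.delta')
  finally show ?thesis .
qed

lemma VX:
  assumes "3 * k \<le> m" "1 \<le> k"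
  shows "Xv \<beta> k 1 (P True m) = (if m = 3 * k then \<beta> (3 * k) else 0)"
proof -
  have "Xv \<beta> k 1 (P True m) = (\<Sum>j\<in>{1..k}. \<beta> (3*j) * Qv 1 (int (3*j)) (P True m))"
    by (simp add: Xv_def)
  also have "\<dots> = (\<Sum>j\<in>{1..k}. if j = k then (if m = 3 * k then \<beta> (3 * k) else 0) else 0)"
    by (rule sum.cong[OF refl]) (use assms in \<open>auto simp: Qv1_PT\<close>)
  also have "\<dots> = (if m = 3 * k then \<beta> (3 * k) else 0)"
    using assms by (simp add: sum.delta')
  finally show ?thesis .
qed

lemma gg_T: "gg \<beta> k (i, True) = tau0 (gg \<beta> k (i, False))"
  by (simp add: gg_def[OF two three])

lemma gg_F_PF: "gg \<beta> k (i, False) (P False m) = 0"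
  by (cases "i = 0") (simp_all add: gg_0F[OF two three] gg_iF[OF two three] Xv_def Yv_def Mform_def Qv1_PF)

lemma gg_T_PT: "gg \<beta> k (i, True) (P True m) = 0"
  by (simp add: gg_T tau0_def gg_F_PF)

lemma gg_T_PF: "gg \<beta> k (i, True) (P False m) = - gg \<beta> k (i, False) (P True m)"
  by (simp add: gg_T tau0_def)

lemma V_hi:
  assumes "1 \<le> k" "i + 3 * k < m" "3 dvd m"
  shows "gg \<beta> k (i, False) (P True m) = 0"
  using assms by (cases "i = 0") (simp_all add: gg_0F[OF two three] gg_iF[OF two three] VX VY)

lemma V_top:
  assumes "1 \<le> k" "\<beta> (3 * k) \<noteq> 0" "3 dvd i"
  shows "gg \<beta> k (i, False) (P True (i + 3 * k)) \<noteq> 0"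
proof (cases "i = 0")
  case True
  then show ?thesis using assms by (simp add: gg_0F[OF two three] VX)
next
  case False
  have "(3::'a)/8 \<noteq> 0" using three two_pows[OF two] by simp
  then show ?thesis using assms False by (simp add: gg_iF[OF two three] VY)
qed

end

context
  fixes \<beta> :: "nat \<Rightarrow> 'a::field" and k :: nat
  assumes two: "(2::'a) \<noteq> 0" and three: "(3::'a) \<noteq> 0"
begin

lemma tau_via_A:
  assumes "hmult (ev (A 0)) v = (\<lambda>d. 3/2 * v d - w d)" and "tau0 v = (\<lambda>d. - w d)"
  shows "tau0 v = hmult (av 0) v + sc (-3/2) v"
  using assms by (auto simp: av_def sc_def)

lemma gg_ideal: "j \<in> JJ \<Longrightarrow> gg \<beta> k j \<in> hideal (Xv \<beta> k 1)"
proof -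
  assume jJ: "j \<in> JJ"
  obtain i t where j: "j = (i, t)" by fastforce
  have i3: "3 dvd i" using jJ j by (simp add: JJ_def[OF two three])
  have i3': "3 dvd int i" using i3 by presburger
  have F: "gg \<beta> k (i, False) \<in> hideal (Xv \<beta> k 1)"
  proof (cases "i = 0")
    case True then show ?thesis by (simp add: gg_0F[OF two three] hideal.gen)
  next
    case False
    then have "sv i \<in> Hcarrier" by (simp add: sv_def ev_Hcarrier)
    then show ?thesis using False hideal.mult[OF _ hideal.gen, of "sv i" "Xv \<beta> k 1"]
      by (simp add: gg_def[OF two three])
  qed
  have avc: "av 0 \<in> Hcarrier" by (simp add: av_def ev_Hcarrier)
  have T: "gg \<beta> k (i, True) \<in> hideal (Xv \<beta> k 1)"
  proof -
    have "tau0 (gg \<beta> k (i, False)) = hmult (av 0) (gg \<beta> k (i, False)) + sc (-3/2) (gg \<beta> k (i, False))"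
    proof (cases "i = 0")
      case True
      show ?thesis unfolding True gg_0F[OF two three]
        by (rule tau_via_A[where w = "Xv \<beta> k (-1)"]) (simp_all add: XA[OF two three] tau0_Xv)
    next
      case False
      then have i0: "0 < i" by simp
      show ?thesis unfolding gg_iF[OF two three i0]
        by (rule tau_via_A[where w = "Yv \<beta> k (-1) (int i)"])
           (simp_all add: YA[OF two three i3'] tau0_Yv[OF two])
    qed
    then show ?thesis unfolding gg_T[OF two three]
      using hideal.add[OF hideal.mult[OF avc F] hideal.smult[OF F]] by simp
  qed
  show ?thesis unfolding j using F T by (cases t) auto
qed

lemma span_ideal: "v \<in> WW \<beta> k \<Longrightarrow> v \<in> hideal (Xv \<beta> k 1)"
proof -
  assume "v \<in> WW \<beta> k"
  then obtain F c where F: "finite F" "F \<subseteq> JJ" "v = (\<lambda>b. \<Sum>j\<in>F. c j * gg \<beta> k j b)"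
    unfolding hspan_def by blast
  have "(\<lambda>b. \<Sum>j\<in>F. c j * gg \<beta> k j b) \<in> hideal (Xv \<beta> k 1)"
    using F(1,2)
  proof (induction F rule: finite_induct)
    case empty
    then show ?case using hideal.zero by (simp add: zero_fun_def)
  next
    case (insert x F)
    then have "sc (c x) (gg \<beta> k x) + (\<lambda>b. \<Sum>j\<in>F. c j * gg \<beta> k j b) \<in> hideal (Xv \<beta> k 1)"
      by (intro hideal.add hideal.smult gg_ideal) auto
    then show ?case using insert by (simp add: sc_def plus_fun_def)
  qed
  then show ?thesis using F by simp
qed

lemma indep:
  assumes k1: "1 \<le> k" and bk: "\<beta> (3 * k) \<noteq> 0"
  shows "hlin_indep (gg \<beta> k) JJ"
  unfolding hlin_indep_def
proof (intro allI impI ballI)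
  fix F c j
  assume fF: "finite F" and FJ: "F \<subseteq> JJ" and z: "(\<lambda>b. \<Sum>j\<in>F. c j * gg \<beta> k j b) = 0" and jF: "j \<in> F"
  have main: "c (i, t) = 0" if "(i, t) \<in> F" for i t
  proof (rule ccontr)
    assume cn: "c (i, t) \<noteq> 0"
    define S where "S = {i. (i, t) \<in> F \<and> c (i, t) \<noteq> 0}"
    have fS: "finite S" unfolding S_def
      by (rule finite_subset[of _ "fst ` F"]) (force, use fF in simp)
    have iS: "i \<in> S" using that cn by (simp add: S_def)
    define i0 where "i0 = Max S"
    have i0S: "i0 \<in> S" using fS iS Max_in unfolding i0_def by blast
    have le: "\<And>i'. i' \<in> S \<Longrightarrow> i' \<le> i0" using fS unfolding i0_def by simp
    have i03: "3 dvd i0" using i0S FJ by (auto simp: S_def JJ_def[OF two three])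
    define m0 where "m0 = i0 + 3 * k"
    define pt where "pt = P (\<not> t) m0"
    have val: "gg \<beta> k (i', t') pt = (if t' = t then (if t then - gg \<beta> k (i', False) (P True m0) else gg \<beta> k (i', False) (P True m0)) else 0)" for i' t'
      unfolding pt_def by (cases t; cases t') (simp_all add: gg_T_PF[OF two three] gg_T_PT[OF two three] gg_F_PF[OF two three])
    have "0 = (\<Sum>j\<in>F. c j * gg \<beta> k j pt)" using fun_cong[OF z, of pt] by simp
    also have "\<dots> = (\<Sum>j\<in>F. if j = (i0, t) then c j * gg \<beta> k j pt else 0)"
    proof (rule sum.cong[OF refl])
      fix j' assume j'F: "j' \<in> F"
      obtain i' t' where j': "j' = (i', t')" by fastforce
      show "c j' * gg \<beta> k j' pt = (if j' = (i0, t) then c j' * gg \<beta> k j' pt else 0)"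
      proof (cases "j' = (i0, t)")
        case True then show ?thesis by simp
      next
        case False
        show ?thesis
        proof (cases "t' = t \<and> c j' \<noteq> 0")
          case True
          then have "i' \<in> S" using j'F j' by (auto simp: S_def)
          then have "i' < i0" using le[of i'] False True j' by fastforce
          then have "gg \<beta> k (i', False) (P True m0) = 0"
            by (intro V_hi[OF two three k1]) (use i03 in \<open>auto simp: m0_def\<close>)
          then show ?thesis using False j' val by simp
        next
          case False2: False
          then show ?thesis using False j' val by auto
        qed
      qed
    qed
    also have "\<dots> = c (i0, t) * gg \<beta> k (i0, t) pt"
      using fF i0S by (simp add: sum.delta' S_def)
    finally have "c (i0, t) * gg \<beta> k (i0, t) pt = 0" by simp
    moreover have "c (i0, t) \<noteq> 0" using i0S by (simp add: S_def)
    moreover have "gg \<beta> k (i0, False) (P True m0) \<noteq> 0"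
      unfolding m0_def by (rule V_top[OF two three, where k=k and \<beta>=\<beta> and i=i0, OF k1 bk i03])
    ultimately show False using val[of i0 t] by (cases t) auto
  qed
  obtain i t where "j = (i, t)" by fastforce
  then show "c j = 0" using main jF by simp
qed

end

theorem theorem7p2:
  fixes \<beta> :: "nat \<Rightarrow> 'a::field" and k :: nat
  assumes "(2::'a) \<noteq> 0" and "(3::'a) \<noteq> 0"
    and "1 \<le> k" and "\<beta> (3 * k) \<noteq> 0"
  defines "x \<equiv> (\<lambda>b. \<Sum>j\<in>{1..k}. \<beta> (3 * j) * pv 1 (3 * j) b)"
  shows "is_hbasis
           (\<lambda>(i, t). (if t then tau0 else id) (if i = 0 then x else hmult (sv i) x))
           {(i, t). 3 dvd i}
           (hideal x)"
proof -
  note two = assms(1) and three = assms(2)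
  have xX: "x = Xv \<beta> k 1" unfolding x_def Xv_def Qv_def abs_of_nat nat_int ..
  have g: "(\<lambda>(i, t). (if t then tau0 else id) (if i = 0 then x else hmult (sv i) x)) = gg \<beta> k"
    unfolding xX gg_def[OF two three] ..
  have J: "{(i, t). 3 dvd i} = JJ" by (simp add: JJ_def[OF two three])
  have "is_hbasis (gg \<beta> k) JJ (hideal (Xv \<beta> k 1))"
    unfolding is_hbasis_def
  proof
    show "hlin_indep (gg \<beta> k) JJ" by (rule indep[OF two three, where k=k and \<beta>=\<beta>, OF assms(3,4)])
    show "hspan (gg \<beta> k) JJ = hideal (Xv \<beta> k 1)"
      using span_ideal[OF two three] ideal_sub[OF two three] by blast
  qed
  then show ?thesis by (subst g, subst J, subst xX, assumption)
qed

end
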